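(* Let $\alpha\in\mathbb{R}$ and let $\ell$ be the power-weighted CRP loss on $(0,\infty)$ with weight $w(y)=y^\alpha$. Let $G$ be a probability distribution on $(0,\infty)$ with scale family $\{G_\sigma\}$ ($G=G_1$), and let $\sigma>1$ be such that $\ell(G,G)$, $\ell(G_\sigma,G)$ and $\ell(G_{1/\sigma},G)$ are finite. Then $\ell(G_\sigma,G)=\ell(G_{1/\sigma},G)$ if $\alpha=-1$; $\ell(G_\sigma,G)>\ell(G_{1/\sigma},G)$ if $\alpha>-1$; and $\ell(G_\sigma,G)<\ell(G_{1/\sigma},G)$ if $\alpha<-1$.
   Context: Power-weighted CRP loss with exponent $\alpha$: for a forecast CDF $F$ on $(0,\infty)$ and outcome $y>0$, $\ell(F,y)=\int_0^\infty x^\alpha(F(x)-\mathbb{I}\{y\le x\})^2dx$; expected loss $\ell(F,G)=\mathbb{E}\,\ell(F,Y)$, $Y\sim G$; induced divergence $d(F,G)=\ell(F,G)-\ell(G,G)=\int_0^\infty y^\alpha(F(y)-G(y))^2dy$. Scale family: if $Y\sim G_1$, $G_\sigma$ is the law of $\sigma Y$. *)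

theory Defs
  imports "HOL-Probability.Probability"
begin

definition pwcrp_loss :: "real \<Rightarrow> (real \<Rightarrow> real) \<Rightarrow> real \<Rightarrow> ennreal" where
  "pwcrp_loss \<alpha> F y =
     (\<integral>\<^sup>+ x \<in> {0<..}. ennreal (x powr \<alpha> * (F x - indicator {y..} x)\<^sup>2) \<partial>lborel)"

definition pwcrp_exp :: "real \<Rightarrow> (real \<Rightarrow> real) \<Rightarrow> real measure \<Rightarrow> ennreal" where
  "pwcrp_exp \<alpha> F M = (\<integral>\<^sup>+ y. pwcrp_loss \<alpha> F y \<partial>M)"

definition scale_law :: "real \<Rightarrow> real measure \<Rightarrow> real measure" where
  "scale_law \<sigma> M = distr M borel (\<lambda>y. \<sigma> * y)"

end

theory Submission
  imports Defs
begin

lemma inner_calc: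
  assumes "real_distribution M" and x: "x > 0"
  shows "(\<integral>\<^sup>+y. ennreal (x powr \<alpha> * (c - indicator {y..} x)\<^sup>2) \<partial>M)
       = ennreal (x powr \<alpha> * ((c - cdf M x)\<^sup>2 + cdf M x * (1 - cdf M x)))"
proof -
  interpret real_distribution M by fact
  have eq: "\<And>y. ennreal (x powr \<alpha> * (c - indicator {y..} x)\<^sup>2)
     = ennreal (x powr \<alpha> * (c - 1)\<^sup>2) * indicator {..x} y + ennreal (x powr \<alpha> * c\<^sup>2) * indicator {x<..} y"
    by (auto simp: indicator_def)
  have c1: "{x<..} = space M - {..x}" by auto
  have m2: "measure M {x<..} = 1 - cdf M x"
    unfolding c1 cdf_def by (subst prob_compl) auto
  have "(\<integral>\<^sup>+y. ennreal (x powr \<alpha> * (c - indicator {y..} x)\<^sup>2) \<partial>M)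
     = ennreal (x powr \<alpha> * (c - 1)\<^sup>2) * emeasure M {..x} + ennreal (x powr \<alpha> * c\<^sup>2) * emeasure M {x<..}"
    unfolding eq by (subst nn_integral_add) (auto simp: nn_integral_cmult_indicator)
  also have "\<dots> = ennreal (x powr \<alpha> * (c - 1)\<^sup>2 * cdf M x + x powr \<alpha> * c\<^sup>2 * (1 - cdf M x))"
  proof -
    have e1: "emeasure M {..x} = ennreal (cdf M x)" by (simp add: emeasure_eq_measure cdf_def)
    have e2: "emeasure M {x<..} = ennreal (1 - cdf M x)" using m2 by (simp add: emeasure_eq_measure)
    have p1: "0 \<le> x powr \<alpha> * (c - 1)\<^sup>2" "0 \<le> x powr \<alpha> * c\<^sup>2" by auto
    show ?thesis unfolding e1 e2
      using cdf_bounded_prob[of x] cdf_nonneg[of x] p1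
      by (simp add: ennreal_mult[symmetric] ennreal_plus[symmetric] del: ennreal_plus)
  qed
  also have "\<dots> = ennreal (x powr \<alpha> * ((c - cdf M x)\<^sup>2 + cdf M x * (1 - cdf M x)))"
    by (rule arg_cong[where f=ennreal]) (simp add: algebra_simps power2_eq_square)
  finally show ?thesis .
qed

lemma decomp:
  assumes RD: "real_distribution M" and Fm[measurable]: "F \<in> borel_measurable borel"
  shows "pwcrp_exp \<alpha> F M = (\<integral>\<^sup>+x\<in>{0<..}. ennreal (x powr \<alpha> * (F x - cdf M x)\<^sup>2) \<partial>lborel)
     + (\<integral>\<^sup>+x\<in>{0<..}. ennreal (x powr \<alpha> * (cdf M x * (1 - cdf M x))) \<partial>lborel)"
proof -
  interpret real_distribution M by fact
  interpret pair_sigma_finite lborel M by unfold_locales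
  have meas: "(\<lambda>(x, y). ennreal (x powr \<alpha> * (F x - indicator {y..} x)\<^sup>2) * indicator {0<..} x)
     \<in> borel_measurable (lborel \<Otimes>\<^sub>M M)"
  proof -
    have "(\<lambda>(x, y). ennreal (x powr \<alpha> * (F x - (if y \<le> x then 1 else 0))\<^sup>2) * indicator {0<..} x)
     \<in> borel_measurable (lborel \<Otimes>\<^sub>M M)"
      by measurable
    moreover have "(\<lambda>(x, y). ennreal (x powr \<alpha> * (F x - indicator {y..} x)\<^sup>2) * indicator {0<..} x)
      = (\<lambda>(x, y). ennreal (x powr \<alpha> * (F x - (if y \<le> x then 1 else 0))\<^sup>2) * indicator {0<..} x)"
      by (auto simp: fun_eq_iff indicator_def)
    ultimately show ?thesis by simp
  qed
  have "pwcrp_exp \<alpha> F M = (\<integral>\<^sup>+y. (\<integral>\<^sup>+x. ennreal (x powr \<alpha> * (F x - indicator {y..} x)\<^sup>2) * indicator {0<..} x \<partial>lborel) \<partial>M)"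
    unfolding pwcrp_exp_def pwcrp_loss_def ..
  also have "\<dots> = (\<integral>\<^sup>+x. (\<integral>\<^sup>+y. ennreal (x powr \<alpha> * (F x - indicator {y..} x)\<^sup>2) * indicator {0<..} x \<partial>M) \<partial>lborel)"
    using Fubini'[OF meas] .
  also have "\<dots> = (\<integral>\<^sup>+x. ennreal (x powr \<alpha> * (F x - cdf M x)\<^sup>2) * indicator {0<..} x
       + ennreal (x powr \<alpha> * (cdf M x * (1 - cdf M x))) * indicator {0<..} x \<partial>lborel)"
  proof (rule nn_integral_cong)
    fix x :: real
    show "(\<integral>\<^sup>+y. ennreal (x powr \<alpha> * (F x - indicator {y..} x)\<^sup>2) * indicator {0<..} x \<partial>M)
      = ennreal (x powr \<alpha> * (F x - cdf M x)\<^sup>2) * indicator {0<..} x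
       + ennreal (x powr \<alpha> * (cdf M x * (1 - cdf M x))) * indicator {0<..} x"
    proof (cases "x > 0")
      case True
      have nn: "0 \<le> x powr \<alpha> * (cdf M x * (1 - cdf M x))"
        using cdf_bounded_prob[of x] cdf_nonneg[of x] by simp
      show ?thesis using True inner_calc[OF RD True, of \<alpha> "F x"] nn
        by (simp add: ennreal_plus[symmetric] distrib_left del: ennreal_plus)
    qed simp
  qed
  also have "\<dots> = (\<integral>\<^sup>+x\<in>{0<..}. ennreal (x powr \<alpha> * (F x - cdf M x)\<^sup>2) \<partial>lborel)
     + (\<integral>\<^sup>+x\<in>{0<..}. ennreal (x powr \<alpha> * (cdf M x * (1 - cdf M x))) \<partial>lborel)"
  proof -
    have [measurable]: "cdf M \<in> borel_measurable borel"
      by (auto intro!: borel_measurable_mono simp: mono_def cdf_nondecreasing)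
    show ?thesis by (rule nn_integral_add) measurable
  qed
  finally show ?thesis .
qed

lemma cdf_scale:
  assumes "real_distribution M" and s: "s > 0"
  shows "cdf (scale_law s M) x = cdf M (x / s)"
proof -
  interpret real_distribution M by fact
  have "(\<lambda>y. s * y) -` {..x} \<inter> space M = {..x/s}"
    using s by (auto simp: field_simps)
  then show ?thesis
    unfolding cdf_def scale_law_def
    by (subst measure_distr) auto
qed

lemma scaling:
  fixes G :: "real \<Rightarrow> real"
  assumes Gm[measurable]: "G \<in> borel_measurable borel" and s: "s > 0"
  shows "(\<integral>\<^sup>+u\<in>{0<..}. ennreal (u powr \<alpha> * (G (u / s) - G u)\<^sup>2) \<partial>lborel)
       = ennreal (s powr (\<alpha> + 1)) * (\<integral>\<^sup>+x\<in>{0<..}. ennreal (x powr \<alpha> * (G (s * x) - G x)\<^sup>2) \<partial>lborel)"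
proof -
  have "(\<integral>\<^sup>+u\<in>{0<..}. ennreal (u powr \<alpha> * (G (u / s) - G u)\<^sup>2) \<partial>lborel)
     = ennreal \<bar>s\<bar> * (\<integral>\<^sup>+x. ennreal ((0 + s * x) powr \<alpha> * (G ((0 + s * x) / s) - G (0 + s * x))\<^sup>2) * indicator {0<..} (0 + s * x) \<partial>lborel)"
    by (rule nn_integral_real_affine) (use s in auto)
  also have "\<dots> = ennreal s * (\<integral>\<^sup>+x. ennreal (s powr \<alpha>) * (ennreal (x powr \<alpha> * (G (s * x) - G x)\<^sup>2) * indicator {0<..} x) \<partial>lborel)"
  proof -
    have "\<And>x. ennreal ((0 + s * x) powr \<alpha> * (G ((0 + s * x) / s) - G (0 + s * x))\<^sup>2) * indicator {0<..} (0 + s * x)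
       = ennreal (s powr \<alpha>) * (ennreal (x powr \<alpha> * (G (s * x) - G x)\<^sup>2) * indicator {0<..} x)"
    proof -
      fix x :: real
      show "?thesis x"
      proof (cases "x > 0")
        case True
        then show ?thesis using s
          by (simp add: powr_mult ennreal_mult' power2_commute[of "G x"] mult.assoc)
      next
        case False
        then show ?thesis using s by (simp add: indicator_def zero_less_mult_iff)
      qed
    qed
    then show ?thesis using s by simp
  qed
  also have "\<dots> = ennreal s * ennreal (s powr \<alpha>) * (\<integral>\<^sup>+x\<in>{0<..}. ennreal (x powr \<alpha> * (G (s * x) - G x)\<^sup>2) \<partial>lborel)"
    by (subst nn_integral_cmult) (auto simp: mult.assoc)
  also have "ennreal s * ennreal (s powr \<alpha>) = ennreal (s powr (\<alpha> + 1))"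
    using s by (simp add: ennreal_mult[symmetric] powr_add)
  finally show ?thesis .
qed

lemma positivity:
  assumes RD: "real_distribution M" and pos: "AE y in M. 0 < y" and s: "s > 1"
  shows "(\<integral>\<^sup>+x\<in>{0<..}. ennreal (x powr \<alpha> * (cdf M (s * x) - cdf M x)\<^sup>2) \<partial>lborel) \<noteq> 0"
proof
  interpret real_distribution M by fact
  define G where "G = cdf M"
  have Gmono: "\<And>a b. a \<le> b \<Longrightarrow> G a \<le> G b" unfolding G_def by (rule cdf_nondecreasing)
  have Gm[measurable]: "G \<in> borel_measurable borel"
    by (auto intro!: borel_measurable_mono simp: mono_def Gmono)
  have Grc: "\<And>a. (G \<longlongrightarrow> G a) (at_right a)"
    unfolding G_def using cdf_is_right_cont by (simp add: continuous_within)
  have G0: "G 0 = 0"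
  proof -
    have "emeasure M {..0} = 0"
      using pos by (subst (asm) AE_iff_measurable[of "{..0}"]) auto
    then show ?thesis unfolding G_def cdf_def by (simp add: measure_def)
  qed
  have "\<exists>x0>0. G (s * x0) \<noteq> G x0"
  proof (rule ccontr)
    assume "\<not> ?thesis"
    then have eq: "\<And>x. x > 0 \<Longrightarrow> G (s * x) = G x" by auto
    have "eventually (\<lambda>x. G x > 1/2) at_top"
      using cdf_lim_at_top_prob unfolding G_def by (rule order_tendstoD) simp
    then obtain N where N: "\<And>x. x \<ge> N \<Longrightarrow> G x > 1/2" by (auto simp: eventually_at_top_linorder)
    define x1 where "x1 = max N 1"
    have x1: "x1 > 0" "G x1 > 1/2" using N unfolding x1_def by auto
    have seq: "G (x1 / s ^ n) = G x1" for n
    proof (induction n)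
      case (Suc n)
      have "G (x1 / s ^ Suc n) = G (s * (x1 / s ^ Suc n))"
        using x1 s by (intro eq[symmetric]) auto
      also have "s * (x1 / s ^ Suc n) = x1 / s ^ n" using s by simp
      finally show ?case using Suc by simp
    qed simp
    have "filterlim (\<lambda>n. x1 / s ^ n) (at_right 0) sequentially"
      unfolding filterlim_at using LIMSEQ_divide_realpow_zero[OF s] x1 s by auto
    from filterlim_compose[OF Grc[of 0] this]
    have "(\<lambda>n. G x1) \<longlonglongrightarrow> 0" unfolding seq G0 .
    then have "G x1 = 0" by (simp add: LIMSEQ_const_iff)
    with x1 show False by simp
  qed
  then obtain x0 where x0: "x0 > 0" "G (s * x0) \<noteq> G x0" by auto
  define \<delta> where "\<delta> = G (s * x0) - G x0"
  have "G (s * x0) \<ge> G x0" using x0 s by (intro Gmono) simp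
  then have \<delta>: "\<delta> > 0" using x0 unfolding \<delta>_def by simp
  have "filterlim (\<lambda>x. s * x) (at_right (s * x0)) (at_right x0)"
    unfolding filterlim_at
  proof
    show "\<forall>\<^sub>F x in at_right x0. s * x \<in> {s * x0<..} \<and> s * x \<noteq> s * x0"
      using eventually_at_right_less[of x0] by eventually_elim (use s in auto)
    show "((\<lambda>x. s * x) \<longlongrightarrow> s * x0) (at_right x0)"
      by (intro tendsto_intros)
  qed
  from filterlim_compose[OF Grc[of "s * x0"] this]
  have "((\<lambda>x. G (s * x) - G x) \<longlongrightarrow> \<delta>) (at_right x0)"
    unfolding \<delta>_def by (intro tendsto_diff Grc)
  then have "eventually (\<lambda>x. G (s * x) - G x > \<delta> / 2) (at_right x0)"
    by (rule order_tendstoD) (use \<delta> in simp)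
  then obtain b where b: "b > x0" "\<And>y. y > x0 \<Longrightarrow> y < b \<Longrightarrow> G (s * y) - G y > \<delta> / 2"
    using eventually_at_right[of x0 "x0 + 1"] by auto
  assume "(\<integral>\<^sup>+x\<in>{0<..}. ennreal (x powr \<alpha> * (cdf M (s * x) - cdf M x)\<^sup>2) \<partial>lborel) = 0"
  then have "AE x in lborel. ennreal (x powr \<alpha> * (G (s * x) - G x)\<^sup>2) * indicator {0<..} x = 0"
    unfolding G_def[symmetric] by (subst (asm) nn_integral_0_iff_AE) auto
  then have "AE x in lborel. x \<notin> {x0<..<b}"
  proof (rule eventually_mono)
    fix x assume h: "ennreal (x powr \<alpha> * (G (s * x) - G x)\<^sup>2) * indicator {0<..} x = 0"
    show "x \<notin> {x0<..<b}"
    proof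
      assume xin: "x \<in> {x0<..<b}"
      then have "x > 0" "G (s * x) - G x > \<delta> / 2" using x0 b by auto
      moreover have "\<delta> / 2 > 0" using \<delta> by simp
      ultimately have "x powr \<alpha> * (G (s * x) - G x)\<^sup>2 > 0" by simp
      with h \<open>x > 0\<close> show False by simp
    qed
  qed
  then have "emeasure lborel {x0<..<b} = 0"
    by (subst (asm) AE_iff_measurable[of "{x0<..<b}"]) auto
  with b show False by simp
qed

theorem mainTheorem14:
  fixes \<alpha> \<sigma> :: real and M :: "real measure"
  assumes "prob_space M" and "sets M = sets borel"
    and "AE y in M. 0 < y"
    and "\<sigma> > 1"
    and "pwcrp_exp \<alpha> (cdf M) M \<noteq> \<infinity>"
    and "pwcrp_exp \<alpha> (cdf (scale_law \<sigma> M)) M \<noteq> \<infinity>"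
    and "pwcrp_exp \<alpha> (cdf (scale_law (1 / \<sigma>) M)) M \<noteq> \<infinity>"
  shows "(\<alpha> = -1 \<longrightarrow> pwcrp_exp \<alpha> (cdf (scale_law \<sigma> M)) M = pwcrp_exp \<alpha> (cdf (scale_law (1 / \<sigma>) M)) M)
       \<and> (\<alpha> > -1 \<longrightarrow> pwcrp_exp \<alpha> (cdf (scale_law \<sigma> M)) M > pwcrp_exp \<alpha> (cdf (scale_law (1 / \<sigma>) M)) M)
       \<and> (\<alpha> < -1 \<longrightarrow> pwcrp_exp \<alpha> (cdf (scale_law \<sigma> M)) M < pwcrp_exp \<alpha> (cdf (scale_law (1 / \<sigma>) M)) M)"
proof -
  have RD: "real_distribution M"
    using assms(1,2) by (simp add: real_distribution_def real_distribution_axioms_def)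
  interpret real_distribution M by fact
  define G where "G = cdf M"
  have Gm[measurable]: "G \<in> borel_measurable borel"
    unfolding G_def by (auto intro!: borel_measurable_mono simp: mono_def cdf_nondecreasing)
  have s0: "\<sigma> > 0" using assms(4) by simp
  have F1: "cdf (scale_law \<sigma> M) = (\<lambda>x. G (x / \<sigma>))"
    using cdf_scale[OF RD s0] unfolding G_def by auto
  have F2: "cdf (scale_law (1 / \<sigma>) M) = (\<lambda>x. G (\<sigma> * x))"
    using cdf_scale[OF RD, of "1/\<sigma>"] s0 unfolding G_def by (auto simp: mult.commute)
  define C where "C = (\<integral>\<^sup>+x\<in>{0<..}. ennreal (x powr \<alpha> * (cdf M x * (1 - cdf M x))) \<partial>lborel)"
  define D where "D = (\<integral>\<^sup>+x\<in>{0<..}. ennreal (x powr \<alpha> * (G (x / \<sigma>) - G x)\<^sup>2) \<partial>lborel)"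
  define D' where "D' = (\<integral>\<^sup>+x\<in>{0<..}. ennreal (x powr \<alpha> * (G (\<sigma> * x) - G x)\<^sup>2) \<partial>lborel)"
  have E0: "pwcrp_exp \<alpha> (cdf M) M = C"
    using decomp[OF RD, of "cdf M" \<alpha>] Gm unfolding C_def G_def by simp
  have E1: "pwcrp_exp \<alpha> (cdf (scale_law \<sigma> M)) M = D + C"
    unfolding F1 D_def C_def G_def by (rule decomp[OF RD]) (use Gm in \<open>simp add: G_def\<close>)
  have E2: "pwcrp_exp \<alpha> (cdf (scale_law (1 / \<sigma>) M)) M = D' + C"
    unfolding F2 D'_def C_def G_def by (rule decomp[OF RD]) (use Gm in \<open>simp add: G_def\<close>)
  have DD: "D = ennreal (\<sigma> powr (\<alpha> + 1)) * D'"
    unfolding D_def D'_def by (rule scaling[OF Gm s0])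
  have Cfin: "C \<noteq> \<infinity>" using assms(5) E0 by simp
  have D'fin: "D' \<noteq> \<infinity>" using assms(7) E2 by simp
  have D'pos: "D' \<noteq> 0" unfolding D'_def G_def by (rule positivity[OF RD assms(3,4)])
  obtain c where c: "C = ennreal c" "c \<ge> 0" using Cfin by (cases C) auto
  obtain d where d: "D' = ennreal d" "d > 0" using D'fin D'pos
    by (cases D') (auto simp: less_le)
  have p0: "\<sigma> powr (\<alpha> + 1) > 0" using s0 by simp
  have Ea: "pwcrp_exp \<alpha> (cdf (scale_law \<sigma> M)) M = ennreal (\<sigma> powr (\<alpha> + 1) * d + c)"
    unfolding E1 DD c d using p0 d c by (simp add: ennreal_mult ennreal_plus)
  have Eb: "pwcrp_exp \<alpha> (cdf (scale_law (1 / \<sigma>) M)) M = ennreal (d + c)"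
    unfolding E2 c d using d c by (simp add: ennreal_plus)
  have nn: "0 \<le> \<sigma> powr (\<alpha> + 1) * d + c" "0 \<le> d + c" using p0 d c by auto
  show ?thesis
  proof (intro conjI impI)
    assume "\<alpha> = -1" then show "pwcrp_exp \<alpha> (cdf (scale_law \<sigma> M)) M = pwcrp_exp \<alpha> (cdf (scale_law (1 / \<sigma>) M)) M"
      unfolding Ea Eb using s0 by simp
  next
    assume a: "\<alpha> > -1"
    have "\<sigma> powr (\<alpha> + 1) > 1" using assms(4) a by (intro gr_one_powr) auto
    then have "\<sigma> powr (\<alpha> + 1) * d > 1 * d" using d by (intro mult_strict_right_mono) auto
    then show "pwcrp_exp \<alpha> (cdf (scale_law \<sigma> M)) M > pwcrp_exp \<alpha> (cdf (scale_law (1 / \<sigma>) M)) M"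
      unfolding Ea Eb using nn by (simp add: ennreal_less_iff)
  next
    assume a: "\<alpha> < -1"
    have "\<sigma> powr (\<alpha> + 1) < 1" using assms(4) a by (intro powr_less_one) auto
    then have "\<sigma> powr (\<alpha> + 1) * d < 1 * d" using d by (intro mult_strict_right_mono) auto
    then show "pwcrp_exp \<alpha> (cdf (scale_law \<sigma> M)) M < pwcrp_exp \<alpha> (cdf (scale_law (1 / \<sigma>) M)) M"
      unfolding Ea Eb using nn by (simp add: ennreal_less_iff)
  qed
qed

end
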